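(* Let $p$ be an odd prime and $N=C_p\times D_{2p}$, with $C_p=\langle c\rangle$ and $D_{2p}=\langle r,s\mid r^p=s^2=1,\ srs=r^{-1}\rangle$. Let $\varphi\in\mathrm{Aut}(N)$ be given by $\varphi(r)=r,\ \varphi(s)=rs,\ \varphi(c)=c$. Then the $p^2-p$ subgroups $$A_{k,l}=\langle (r,\varphi^k),(c,\varphi^l)\rangle,\quad 0\le k\le p-2,\ 0\le l\le p-1,$$ are isomorphic to $C_p\times C_p$ and are precisely the semiregular subgroups of order $p^2$ of $\mathrm{Hol}(N)$.
   Context: $\mathrm{Hol}(N)=N\rtimes\mathrm{Aut}(N)$, with elements $(x,\varphi)$, product $(x,\varphi)(y,\psi)=(x\varphi(y),\varphi\psi)$, acting on $N$ by $(x,\varphi)\cdot n=x\varphi(n)$. A subgroup is semiregular if all stabilizers of points of $N$ under this action are trivial. *)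

theory Defs
  imports "HOL-Algebra.Algebra"
begin

text \<open>The dihedral group D_{2p} of order 2p, realised concretely: the pair (i,e)
  stands for r^i s^e with 0 \<le> i < n, e \<in> {0,1}; then
  (r^i s^e)(r^j s^f) = r^(i + (-1)^e j) s^(e+f).\<close>
definition dihedral_group :: "nat \<Rightarrow> (int \<times> int) monoid" where
  "dihedral_group n =
     \<lparr>carrier = {0..<int n} \<times> {0..<2},
      monoid.mult = (\<lambda>(i,e) (j,f). ((i + (if e = 0 then j else - j)) mod int n, (e + f) mod 2)),
      one = (0, 0)\<rparr>"

definition holomorph :: "('a, 'b) monoid_scheme \<Rightarrow> ('a \<times> ('a \<Rightarrow> 'a)) monoid" where
  "holomorph N =
     \<lparr>carrier = carrier N \<times> auto N,
      monoid.mult = (\<lambda>(x, f) (y, g). (x \<otimes>\<^bsub>N\<^esub> f y, compose (carrier N) f g)),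
      one = (\<one>\<^bsub>N\<^esub>, (\<lambda>x \<in> carrier N. x))\<rparr>"

definition hol_act :: "('a, 'b) monoid_scheme \<Rightarrow> 'a \<times> ('a \<Rightarrow> 'a) \<Rightarrow> 'a \<Rightarrow> 'a" where
  "hol_act N h n = fst h \<otimes>\<^bsub>N\<^esub> (snd h) n"

definition semiregular :: "('a, 'b) monoid_scheme \<Rightarrow> ('a \<times> ('a \<Rightarrow> 'a)) set \<Rightarrow> bool" where
  "semiregular N H \<longleftrightarrow>
     (\<forall>n \<in> carrier N. \<forall>h \<in> H. hol_act N h n = n \<longrightarrow> h = \<one>\<^bsub>holomorph N\<^esub>)"

end

theory Submission
  imports Defs
begin

lemma dihedral_carrier: "carrier (dihedral_group n) = {0..<int n} \<times> {0..<2}"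
  by (simp add: dihedral_group_def)
lemma dihedral_one[simp]: "one (dihedral_group n) = (0,0)"
  by (simp add: dihedral_group_def)
lemma dihedral_mult[simp]: "(i,e) \<otimes>\<^bsub>dihedral_group n\<^esub> (j,f) =
   ((i + (if e = 0 then j else - j)) mod int n, (e + f) mod 2)"
  by (simp add: dihedral_group_def)

lemma int01: "0 \<le> b \<Longrightarrow> b < 2 \<Longrightarrow> b = 0 \<or> b = (1::int)" by auto

lemma dihedral_group: assumes "n > 0" shows "group (dihedral_group n)"
proof (rule groupI)
  fix x y assume "x \<in> carrier (dihedral_group n)" "y \<in> carrier (dihedral_group n)"
  then show "x \<otimes>\<^bsub>dihedral_group n\<^esub> y \<in> carrier (dihedral_group n)"
    using assms by (cases x; cases y) (auto simp: dihedral_carrier)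
next
  show "\<one>\<^bsub>dihedral_group n\<^esub> \<in> carrier (dihedral_group n)" using assms by (simp add: dihedral_carrier)
next
  fix x y z assume "x \<in> carrier (dihedral_group n)" "y \<in> carrier (dihedral_group n)" "z \<in> carrier (dihedral_group n)"
  then obtain i e j f k g where xyz: "x = (i,e)" "y = (j,f)" "z = (k,g)" and efg: "e \<in> {0,1}" "f \<in> {0,1}" "g \<in> {0,1}"
    by (cases x; cases y; cases z) (auto simp: dihedral_carrier dest!: int01)
  show "x \<otimes>\<^bsub>dihedral_group n\<^esub> y \<otimes>\<^bsub>dihedral_group n\<^esub> z = x \<otimes>\<^bsub>dihedral_group n\<^esub> (y \<otimes>\<^bsub>dihedral_group n\<^esub> z)"
    using efg unfolding xyz
    by (auto simp: mod_add_left_eq mod_add_right_eq mod_minus_eq mod_diff_right_eq algebra_simps)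
next
  fix x assume "x \<in> carrier (dihedral_group n)"
  then show "\<one>\<^bsub>dihedral_group n\<^esub> \<otimes>\<^bsub>dihedral_group n\<^esub> x = x"
    by (cases x) (auto simp: dihedral_carrier)
next
  fix x assume x: "x \<in> carrier (dihedral_group n)"
  then obtain i e where xe: "x = (i,e)" "e \<in> {0,1}" "0 \<le> i" "i < int n" by (cases x) (auto simp: dihedral_carrier dest!: int01)
  show "\<exists>y\<in>carrier (dihedral_group n). y \<otimes>\<^bsub>dihedral_group n\<^esub> x = \<one>\<^bsub>dihedral_group n\<^esub>"
  proof (cases "e = 0")
    case True
    then show ?thesis using xe assms
      by (intro bexI[of _ "((-i) mod int n, 0)"]) (auto simp: dihedral_carrier mod_add_left_eq)
  next
    case False
    then show ?thesis using xe assms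
      by (intro bexI[of _ "(i, 1)"]) (auto simp: dihedral_carrier)
  qed
qed

lemma hol_carrier[simp]: "carrier (holomorph N) = carrier N \<times> auto N"
  by (simp add: holomorph_def)
lemma hol_mult[simp]: "(x,f) \<otimes>\<^bsub>holomorph N\<^esub> (y,g) = (x \<otimes>\<^bsub>N\<^esub> f y, compose (carrier N) f g)"
  by (simp add: holomorph_def)
lemma hol_one[simp]: "\<one>\<^bsub>holomorph N\<^esub> = (\<one>\<^bsub>N\<^esub>, (\<lambda>x \<in> carrier N. x))"
  by (simp add: holomorph_def)

lemma auto_mult: "f \<in> auto N \<Longrightarrow> g \<in> auto N \<Longrightarrow> f \<otimes>\<^bsub>AutoGroup N\<^esub> g = compose (carrier N) f g"
  by (simp add: AutoGroup_def BijGroup_def auto_def)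
lemma auto_one: "\<one>\<^bsub>AutoGroup N\<^esub> = (\<lambda>x \<in> carrier N. x)"
  by (simp add: AutoGroup_def BijGroup_def)
lemma auto_carrier: "carrier (AutoGroup N) = auto N"
  by (simp add: AutoGroup_def BijGroup_def)

lemma auto_compose: "group N \<Longrightarrow> f \<in> auto N \<Longrightarrow> g \<in> auto N \<Longrightarrow> compose (carrier N) f g \<in> auto N"
  by (metis auto_carrier auto_mult group.AutoGroup monoid.m_closed group.is_monoid)

lemma auto_funcset: "f \<in> auto N \<Longrightarrow> x \<in> carrier N \<Longrightarrow> f x \<in> carrier N"
  by (auto simp: auto_def hom_def)
lemma auto_hom: "f \<in> auto N \<Longrightarrow> x \<in> carrier N \<Longrightarrow> y \<in> carrier N \<Longrightarrow> f (x \<otimes>\<^bsub>N\<^esub> y) = f x \<otimes>\<^bsub>N\<^esub> f y"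
  by (auto simp: auto_def hom_def)
lemma auto_ext: "f \<in> auto N \<Longrightarrow> f \<in> extensional (carrier N)"
  by (auto simp: auto_def Bij_def)

lemma holomorph_group: assumes N: "group N" shows "group (holomorph N)"
proof (rule groupI)
  fix x y assume "x \<in> carrier (holomorph N)" "y \<in> carrier (holomorph N)"
  then show "x \<otimes>\<^bsub>holomorph N\<^esub> y \<in> carrier (holomorph N)"
    using N by (cases x; cases y) (auto simp: auto_compose auto_funcset group.is_monoid monoid.m_closed)
next
  show "\<one>\<^bsub>holomorph N\<^esub> \<in> carrier (holomorph N)" using N by (simp add: group.id_in_auto group.is_monoid monoid.one_closed)
next
  fix x y z assume "x \<in> carrier (holomorph N)" "y \<in> carrier (holomorph N)" "z \<in> carrier (holomorph N)"
  then obtain a f b g c h where xyz: "x = (a,f)" "y = (b,g)" "z = (c,h)" and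
     inn: "a \<in> carrier N" "b \<in> carrier N" "c \<in> carrier N" "f \<in> auto N" "g \<in> auto N" "h \<in> auto N"
    by (cases x; cases y; cases z) auto
  have fs: "f \<in> carrier N \<rightarrow> carrier N" "g \<in> carrier N \<rightarrow> carrier N" "h \<in> carrier N \<rightarrow> carrier N"
    using inn by (auto simp: auto_funcset)
  show "x \<otimes>\<^bsub>holomorph N\<^esub> y \<otimes>\<^bsub>holomorph N\<^esub> z = x \<otimes>\<^bsub>holomorph N\<^esub> (y \<otimes>\<^bsub>holomorph N\<^esub> z)"
    unfolding xyz using inn fs N
    by (simp add: compose_assoc auto_hom auto_funcset group.is_monoid monoid.m_closed monoid.m_assoc compose_def cong: restrict_cong)
next
  fix x assume "x \<in> carrier (holomorph N)"
  then obtain a f where x: "x = (a,f)" "a \<in> carrier N" "f \<in> auto N" by (cases x) auto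
  show "\<one>\<^bsub>holomorph N\<^esub> \<otimes>\<^bsub>holomorph N\<^esub> x = x"
  proof -
    have "compose (carrier N) (\<lambda>x\<in>carrier N. x) f = f"
      by (rule ext) (simp add: compose_def extensional_arb[OF auto_ext[OF x(3)]] auto_funcset[OF x(3)])
    moreover have "\<one>\<^bsub>N\<^esub> \<otimes>\<^bsub>N\<^esub> a = a" using monoid.l_one[OF group.is_monoid[OF N] x(2)] .
    ultimately show ?thesis unfolding x(1) using x(2) by simp
  qed
next
  fix x assume "x \<in> carrier (holomorph N)"
  then obtain a f where x: "x = (a,f)" "a \<in> carrier N" "f \<in> auto N" by (cases x) auto
  interpret AG: group "AutoGroup N" using N by (rule group.AutoGroup)
  interpret N: group N by (rule N)
  define g where "g = inv\<^bsub>AutoGroup N\<^esub> f"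
  have g: "g \<in> auto N" "compose (carrier N) g f = (\<lambda>x \<in> carrier N. x)"
    using x(3) unfolding g_def
    by (metis AG.inv_closed AG.l_inv auto_carrier auto_mult auto_one)+
  have gh: "group_hom N N g" using g(1) N by (simp add: group_hom_def group_hom_axioms_def auto_def)
  have "g (inv\<^bsub>N\<^esub> a) \<otimes>\<^bsub>N\<^esub> g a = \<one>\<^bsub>N\<^esub>"
    using x(2) g(1) auto_hom[of g N] group_hom.hom_one[OF gh] by (metis N.inv_closed N.l_inv)
  then show "\<exists>y\<in>carrier (holomorph N). y \<otimes>\<^bsub>holomorph N\<^esub> x = \<one>\<^bsub>holomorph N\<^esub>"
    using g x by (intro bexI[of _ "(g (inv\<^bsub>N\<^esub> a), g)"]) (auto simp: auto_funcset)
qed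

lemma fermat_step: fixes a p :: nat assumes "Factorial_Ring.prime p"
  shows "\<exists>m. (a+1)^p = a^p + 1 + p*m"
proof -
  have p0: "p > 0" "p \<noteq> 0" using assms prime_gt_0_nat by auto
  have "(a+1)^p = (\<Sum>k\<le>p. (p choose k) * a^k)"
    using binomial[of a 1 p] by simp
  also have "{..p} = insert 0 (insert p {1..<p})" using p0 by auto
  also have "(\<Sum>k\<in>insert 0 (insert p {1..<p}). (p choose k) * a^k) = 1 + (a^p + (\<Sum>k\<in>{1..<p}. (p choose k) * a^k))"
    using p0 by (subst sum.insert; auto)+
  finally have eq: "(a+1)^p = 1 + (a^p + (\<Sum>k\<in>{1..<p}. (p choose k) * a^k))" .
  have "p dvd (\<Sum>k\<in>{1..<p}. (p choose k) * a^k)"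
    by (rule dvd_sum) (use assms in \<open>auto intro!: dvd_mult2 dvd_choose_prime\<close>)
  then obtain m where "(\<Sum>k\<in>{1..<p}. (p choose k) * a^k) = p * m" by (auto elim: dvdE)
  with eq show ?thesis by (intro exI[of _ m]) simp
qed

lemma fermat_nat: fixes a p :: nat assumes "Factorial_Ring.prime p" shows "a^p mod p = a mod p"
proof (induction a)
  case 0 then show ?case using assms prime_gt_0_nat by (simp add: zero_power)
next
  case (Suc a)
  obtain m where "(a+1)^p = a^p + 1 + p*m" using fermat_step[OF assms] by blast
  then have "(Suc a)^p mod p = (a^p + 1) mod p" by simp
  also have "\<dots> = (a^p mod p + 1) mod p" by (metis mod_add_left_eq)
  also have "\<dots> = (a mod p + 1) mod p" using Suc by simp
  also have "\<dots> = Suc a mod p" by (metis mod_add_left_eq Suc_eq_plus1)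
  finally show ?case .
qed

lemma fermat_sq: fixes a p :: nat assumes "Factorial_Ring.prime p" shows "a^(p*p) mod p = a mod p"
  by (metis assms fermat_nat power_mod power_mult)

locale L17 =
  fixes p :: nat
  assumes prime: "Factorial_Ring.prime p" and odd: "odd p"
begin

abbreviation "N \<equiv> integer_mod_group p \<times>\<times> dihedral_group p"
abbreviation "P \<equiv> int p"

lemma p3: "p \<ge> 3"
proof -
  have "p \<ge> 2" using prime prime_ge_2_nat by blast
  moreover have "p \<noteq> 2" using odd by auto
  ultimately show ?thesis by auto
qed
lemma P3: "P \<ge> 3" using p3 by simp
lemma p0: "p \<noteq> 0" using p3 by simp

lemma ZC[simp]: "carrier (integer_mod_group p) = {0..<P}"
  using p0 by (simp add: carrier_integer_mod_group)
lemma DC[simp]: "carrier (dihedral_group p) = {0..<P} \<times> {0..<2}"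
  by (simp add: dihedral_carrier)

lemma NC: "carrier N = {0..<P} \<times> ({0..<P} \<times> {0..<2})"
  using p0 by (simp add: carrier_integer_mod_group dihedral_carrier)
lemma Nmult[simp]: "(b,(a,e)) \<otimes>\<^bsub>N\<^esub> (b',(a',e')) =
   ((b+b') mod P, ((a + (if e = 0 then a' else -a')) mod P, (e+e') mod 2))"
  by simp
lemma None[simp]: "\<one>\<^bsub>N\<^esub> = (0,(0,0))" by simp
lemma Ngroup: "group N"
  using p0 by (intro DirProd_group group_integer_mod_group dihedral_group) auto

lemma inNC: "(b,(a,e)) \<in> carrier N \<longleftrightarrow> 0 \<le> b \<and> b < P \<and> 0 \<le> a \<and> a < P \<and> (e = 0 \<or> e = 1)"
  unfolding NC by auto

definition G :: "int \<Rightarrow> int \<Rightarrow> int \<Rightarrow> (int \<times> (int \<times> int) \<Rightarrow> int \<times> (int \<times> int))" where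
  "G a b t = (\<lambda>x\<in>carrier N. ((a * fst x) mod P, ((b * fst (snd x) + t * snd (snd x)) mod P, snd (snd x))))"

lemma G_apply: "0 \<le> \<beta> \<Longrightarrow> \<beta> < P \<Longrightarrow> 0 \<le> \<alpha> \<Longrightarrow> \<alpha> < P \<Longrightarrow> (e = 0 \<or> e = 1) \<Longrightarrow>
   G a b t (\<beta>,(\<alpha>,e)) = ((a * \<beta>) mod P, ((b * \<alpha> + t * e) mod P, e))"
  unfolding G_def by (subst restrict_apply') (auto simp: inNC)

lemma modtriv: "0 \<le> x \<Longrightarrow> x < P \<Longrightarrow> x mod P = x" by simp

lemma auto_form:
  assumes psi: "\<psi> \<in> auto N" and c: "\<psi> (1,(0,0)) = (a,(0,0))" and r: "\<psi> (0,(1,0)) = (0,(b,0))"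
    and s: "\<psi> (0,(0,1)) = (0,(t,1))"
  shows "\<psi> = G a b t"
proof (rule ext)
  fix x
  show "\<psi> x = G a b t x"
  proof (cases "x \<in> carrier N")
    case False
    then show ?thesis using extensional_arb[OF auto_ext[OF psi] False] by (simp add: G_def)
  next
    case True
    then obtain \<beta> \<alpha> e where x: "x = (\<beta>,(\<alpha>,e))" and rng: "0 \<le> \<beta>" "\<beta> < P" "0 \<le> \<alpha>" "\<alpha> < P" "e = 0 \<or> e = 1"
      unfolding NC by (auto dest!: int01)
    have 1: "(1::int) < P" using P3 by simp
    have cin: "(1,(0,0)) \<in> carrier N" "(0,(1,0)) \<in> carrier N" "(0,(0,1)) \<in> carrier N" using 1 by (auto simp: inNC)
    have arng: "0 \<le> a" "a < P" using auto_funcset[OF psi cin(1)] c by (auto simp: inNC)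
    have brng: "0 \<le> b" "b < P" using auto_funcset[OF psi cin(2)] r by (auto simp: inNC)
    have trng: "0 \<le> t" "t < P" using auto_funcset[OF psi cin(3)] s by (auto simp: inNC)
    have cpow: "\<psi> (int n,(0,0)) = ((a * int n) mod P, (0,0))" if "n < p" for n
      using that
    proof (induction n)
      case 0
      have "\<psi> \<one>\<^bsub>N\<^esub> = \<one>\<^bsub>N\<^esub>"
        using psi Ngroup by (intro group_hom.hom_one) (auto simp: group_hom_def group_hom_axioms_def auto_def)
      then show ?case by simp
    next
      case (Suc n)
      have eq: "(int (Suc n),(0,0)) = (1,(0,0)) \<otimes>\<^bsub>N\<^esub> (int n,(0,0))" using Suc.prems by simp
      have "\<psi> (int (Suc n),(0,0)) = \<psi> (1,(0,0)) \<otimes>\<^bsub>N\<^esub> \<psi> (int n,(0,0))"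
        by (subst eq, rule auto_hom[OF psi]) (use Suc.prems cin in auto)
      also have "\<dots> = ((a + (a * int n) mod P) mod P, (0,0))" using Suc c by simp
      also have "\<dots> = ((a * int (Suc n)) mod P, (0,0))" by (simp add: mod_add_right_eq algebra_simps)
      finally show ?case .
    qed
    have rpow: "\<psi> (0,(int n,0)) = (0,((b * int n) mod P, 0))" if "n < p" for n
      using that
    proof (induction n)
      case 0
      have "\<psi> \<one>\<^bsub>N\<^esub> = \<one>\<^bsub>N\<^esub>"
        using psi Ngroup by (intro group_hom.hom_one) (auto simp: group_hom_def group_hom_axioms_def auto_def)
      then show ?case by simp
    next
      case (Suc n)
      have eq: "(0,(int (Suc n),0)) = (0,(1,0)) \<otimes>\<^bsub>N\<^esub> (0,(int n,0))" using Suc.prems by simp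
      have "\<psi> (0,(int (Suc n),0)) = \<psi> (0,(1,0)) \<otimes>\<^bsub>N\<^esub> \<psi> (0,(int n,0))"
        by (subst eq, rule auto_hom[OF psi]) (use Suc.prems cin in auto)
      also have "\<dots> = (0,((b + (b * int n) mod P) mod P, 0))" using Suc r by simp
      also have "\<dots> = (0,((b * int (Suc n)) mod P, 0))" by (simp add: mod_add_right_eq algebra_simps)
      finally show ?case .
    qed
    have spow: "\<psi> (0,(0,e)) = (0,((t*e) mod P,e))"
    proof (cases "e = 0")
      case True
      have "\<psi> \<one>\<^bsub>N\<^esub> = \<one>\<^bsub>N\<^esub>"
        using psi Ngroup by (intro group_hom.hom_one) (auto simp: group_hom_def group_hom_axioms_def auto_def)
      then show ?thesis using True by simp
    next
      case False
      then show ?thesis using rng s trng by auto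
    qed
    have xdec: "x = (\<beta>,(0,0)) \<otimes>\<^bsub>N\<^esub> ((0,(\<alpha>,0)) \<otimes>\<^bsub>N\<^esub> (0,(0,e)))"
      using rng unfolding x by auto
    have "\<psi> x = \<psi> (\<beta>,(0,0)) \<otimes>\<^bsub>N\<^esub> (\<psi> (0,(\<alpha>,0)) \<otimes>\<^bsub>N\<^esub> \<psi> (0,(0,e)))"
      unfolding xdec using rng 1 by (subst auto_hom[OF psi], force, force, subst auto_hom[OF psi], auto)
    also have "\<psi> (\<beta>,(0,0)) = ((a * \<beta>) mod P, (0,0))"
      using cpow[of "nat \<beta>"] rng by simp
    also have "\<psi> (0,(\<alpha>,0)) = (0,((b * \<alpha>) mod P, 0))"
      using rpow[of "nat \<alpha>"] rng by simp
    finally show ?thesis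
      unfolding spow x using rng
      by (auto simp: G_apply mod_add_right_eq mod_add_left_eq)
  qed
qed

lemma Pprime: "Factorial_Ring.prime P" using prime by (simp add: prime_int_nat_transfer)

lemma dvd2: "P dvd 2 * y \<Longrightarrow> P dvd y"
proof -
  assume "P dvd 2 * y"
  then have "P dvd 2 \<or> P dvd y" using Pprime prime_dvd_mult_iff by blast
  moreover have "\<not> P dvd 2" using P3 by (auto dest: zdvd_imp_le)
  ultimately show ?thesis by blast
qed

lemma mod2: "0 \<le> x \<Longrightarrow> x < P \<Longrightarrow> (x + x) mod P = 0 \<Longrightarrow> x = 0"
proof -
  assume a: "0 \<le> x" "x < P" "(x + x) mod P = 0"
  then have "P dvd (x + x)" by (intro mod_0_imp_dvd)
  then have "P dvd 2 * x" by (simp only: mult_2)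
  then have "P dvd x" by (rule dvd2)
  then obtain q where q: "x = P * q" by (elim dvdE)
  then show "x = 0" using a by (cases "q = 0") (auto simp: q zero_le_mult_iff)
qed

lemma dvd_small: "P dvd z \<Longrightarrow> - P < z \<Longrightarrow> z < P \<Longrightarrow> z = 0"
proof (rule ccontr)
  assume a: "P dvd z" "- P < z" "z < P" "z \<noteq> 0"
  then have "\<bar>P\<bar> \<le> \<bar>z\<bar>" by (intro dvd_imp_le_int)
  then show False using a by linarith
qed

lemma modeq2: "0 \<le> x \<Longrightarrow> x < P \<Longrightarrow> 0 \<le> y \<Longrightarrow> y < P \<Longrightarrow> P dvd 2 * (x - y) \<Longrightarrow> x = y"
proof -
  assume a: "0 \<le> x" "x < P" "0 \<le> y" "y < P" "P dvd 2 * (x - y)"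
  have "P dvd (x - y)" using a(5) by (rule dvd2)
  then have "x - y = 0" using a by (intro dvd_small) auto
  then show "x = y" by simp
qed

lemma auto_inj: "\<psi> \<in> auto N \<Longrightarrow> x \<in> carrier N \<Longrightarrow> y \<in> carrier N \<Longrightarrow> \<psi> x = \<psi> y \<Longrightarrow> x = y"
  unfolding auto_def Bij_def bij_betw_def by (metis (no_types, lifting) IntD2 inj_onD mem_Collect_eq)

lemma auto_one_N: "\<psi> \<in> auto N \<Longrightarrow> \<psi> (0,(0,0)) = (0,(0,0))"
proof -
  assume "\<psi> \<in> auto N"
  then have "group_hom N N \<psi>" using Ngroup by (simp add: group_hom_def group_hom_axioms_def auto_def)
  then show ?thesis using group_hom.hom_one[of N N \<psi>] by simp
qed

lemma auto_class:
  assumes psi: "\<psi> \<in> auto N"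
  shows "\<exists>a b t. \<psi> = G a b t \<and> 0 \<le> a \<and> a < P \<and> 0 \<le> b \<and> b < P \<and> 0 \<le> t \<and> t < P"
proof -
  have 1: "(1::int) < P" using P3 by simp
  have cin: "(1,(0,0)) \<in> carrier N" "(0,(1,0)) \<in> carrier N" "(0,(0,1)) \<in> carrier N" "(0,(0,0)) \<in> carrier N"
    using 1 by (auto simp: inNC)
  have hom: "\<And>x y. x \<in> carrier N \<Longrightarrow> y \<in> carrier N \<Longrightarrow> \<psi> (x \<otimes>\<^bsub>N\<^esub> y) = \<psi> x \<otimes>\<^bsub>N\<^esub> \<psi> y"
    by (rule auto_hom[OF psi])
  have one: "\<psi> (0,(0,0)) = (0,(0,0))" by (rule auto_one_N[OF psi])
  obtain x1 x2 x3 where sv: "\<psi> (0,(0,1)) = (x1,(x2,x3))" and xr: "0 \<le> x1" "x1 < P" "0 \<le> x2" "x2 < P" "x3 = 0 \<or> x3 = 1"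
    using auto_funcset[OF psi cin(3)] unfolding NC by (cases "\<psi> (0,(0,1))") (auto dest!: int01)
  have "\<psi> ((0,(0,1)) \<otimes>\<^bsub>N\<^esub> (0,(0,1))) = \<psi> (0,(0,1)) \<otimes>\<^bsub>N\<^esub> \<psi> (0,(0,1))" using cin by (intro hom)
  then have sq: "(0,(0,0)) = (x1,(x2,x3)) \<otimes>\<^bsub>N\<^esub> (x1,(x2,x3))" using one sv by simp
  have x1: "x1 = 0" by (rule mod2) (use sq xr in auto)
  have x3: "x3 = 1"
  proof (rule ccontr)
    assume "x3 \<noteq> 1"
    then have "x3 = 0" using xr by auto
    then have "x2 = 0" using sq xr by - (rule mod2, auto)
    then have "\<psi> (0,(0,1)) = \<psi> (0,(0,0))" using sv x1 \<open>x3 = 0\<close> one by simp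
    then show False using auto_inj[OF psi cin(3) cin(4)] by simp
  qed
  define t where "t = x2"
  have sv': "\<psi> (0,(0,1)) = (0,(t,1))" using sv x1 x3 t_def by simp
  obtain y1 y2 y3 where rv: "\<psi> (0,(1,0)) = (y1,(y2,y3))" and yr: "0 \<le> y1" "y1 < P" "0 \<le> y2" "y2 < P" "y3 = 0 \<or> y3 = 1"
    using auto_funcset[OF psi cin(2)] unfolding NC by (cases "\<psi> (0,(1,0))") (auto dest!: int01)
  define sr where "sr = (0::int,((-1) mod P, 1::int))"
  have sr_in: "sr \<in> carrier N" using 1 by (simp add: sr_def inNC)
  have sr_eq: "sr = (0,(0,1)) \<otimes>\<^bsub>N\<^esub> (0,(1,0))" by (simp add: sr_def)
  have sr_sq: "sr \<otimes>\<^bsub>N\<^esub> sr = (0,(0,0))" by (simp add: sr_def mod_add_left_eq mod_add_right_eq)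
  have w: "\<psi> sr = (y1, ((t - y2) mod P, (1 + y3) mod 2))"
    unfolding sr_eq using cin yr by (subst hom) (auto simp: sv' rv)
  have "\<psi> (sr \<otimes>\<^bsub>N\<^esub> sr) = \<psi> sr \<otimes>\<^bsub>N\<^esub> \<psi> sr" using sr_in by (intro hom)
  then have wsq: "(0,(0,0)) = \<psi> sr \<otimes>\<^bsub>N\<^esub> \<psi> sr" using sr_sq one by simp
  have y1: "y1 = 0" by (rule mod2) (use wsq yr in \<open>auto simp: w\<close>)
  have y3: "y3 = 0"
  proof (rule ccontr)
    assume "y3 \<noteq> 0"
    then have y31: "y3 = 1" using yr by auto
    have "(t - y2) mod P = 0"
      by (rule mod2) (use wsq yr P3 in \<open>auto simp: w y31\<close>)
    then have "P dvd (t - y2)" by (rule mod_0_imp_dvd)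
    then have "t - y2 = 0" using yr xr t_def by - (rule dvd_small, auto)
    then have "t = y2" by simp
    then have "\<psi> (0,(1,0)) = \<psi> (0,(0,1))" using rv sv' y1 y31 by simp
    then show False using auto_inj[OF psi cin(2) cin(3)] by simp
  qed
  define b where "b = y2"
  have rv': "\<psi> (0,(1,0)) = (0,(b,0))" using rv y1 y3 b_def by simp
  have b0: "b \<noteq> 0"
  proof
    assume "b = 0"
    then have "\<psi> (0,(1,0)) = \<psi> (0,(0,0))" using rv' one by simp
    then show False using auto_inj[OF psi cin(2) cin(4)] by simp
  qed
  obtain z1 z2 z3 where cv: "\<psi> (1,(0,0)) = (z1,(z2,z3))" and zr: "0 \<le> z1" "z1 < P" "0 \<le> z2" "z2 < P" "z3 = 0 \<or> z3 = 1"
    using auto_funcset[OF psi cin(1)] unfolding NC by (cases "\<psi> (1,(0,0))") (auto dest!: int01)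
  have cr: "(1,(0,0)) \<otimes>\<^bsub>N\<^esub> (0,(1,0)) = (0,(1,0)) \<otimes>\<^bsub>N\<^esub> (1,(0,0))" by simp
  have cs: "(1,(0,0)) \<otimes>\<^bsub>N\<^esub> (0,(0,1)) = (0,(0,1)) \<otimes>\<^bsub>N\<^esub> (1,(0,0))" by simp
  have cr': "\<psi> (1,(0,0)) \<otimes>\<^bsub>N\<^esub> \<psi> (0,(1,0)) = \<psi> (0,(1,0)) \<otimes>\<^bsub>N\<^esub> \<psi> (1,(0,0))"
    using cin by (metis cr hom)
  have cs': "\<psi> (1,(0,0)) \<otimes>\<^bsub>N\<^esub> \<psi> (0,(0,1)) = \<psi> (0,(0,1)) \<otimes>\<^bsub>N\<^esub> \<psi> (1,(0,0))"
    using cin by (metis cs hom)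
  have z3: "z3 = 0"
  proof (rule ccontr)
    assume "z3 \<noteq> 0"
    then have z31: "z3 = 1" using zr by auto
    from cr' have "(z2 - b) mod P = (b + z2) mod P" unfolding cv rv' z31 by simp
    then have "P dvd 2 * (b - 0)" by (simp add: mod_eq_dvd_iff algebra_simps)
    then have "b = 0" using yr b_def P3 by - (rule modeq2, auto)
    then show False using b0 by simp
  qed
  from cs' have "(z2 + t) mod P = (t - z2) mod P" unfolding cv sv' z3 by simp
  then have "P dvd 2 * (z2 - 0)" by (simp add: mod_eq_dvd_iff algebra_simps)
  then have z2: "z2 = 0" using zr P3 by - (rule modeq2, auto)
  have cv': "\<psi> (1,(0,0)) = (z1,(0,0))" using cv z2 z3 by simp
  have "\<psi> = G z1 b t" by (rule auto_form[OF psi cv' rv' sv'])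
  moreover have "0 \<le> t \<and> t < P" using xr t_def by simp
  ultimately show ?thesis using zr yr b_def by blast
qed

end

context L17 begin

abbreviation "Hol \<equiv> holomorph N"

lemma mm1: "(u + v * (w mod P)) mod P = (u + v * w) mod (P::int)"
  by (metis mod_add_right_eq mod_mult_right_eq)
lemma mm2: "(u + (w mod P) * v) mod P = (u + w * v) mod (P::int)"
  by (metis mod_add_right_eq mod_mult_left_eq)

lemma G_out: "G a b t x \<in> carrier N \<or> G a b t x = undefined"
  by (auto simp: G_def inNC)

lemma G_in: "x \<in> carrier N \<Longrightarrow> G a b t x \<in> carrier N"
  using P3 by (auto simp: G_def NC)

lemma compose_G: "compose (carrier N) (G a b t) (G a' b' t') = G (a*a') (b*b') (b*t' + t)"
proof (rule ext)
  fix x show "compose (carrier N) (G a b t) (G a' b' t') x = G (a*a') (b*b') (b*t' + t) x"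
  proof (cases "x \<in> carrier N")
    case False then show ?thesis by (simp add: compose_def G_def)
  next
    case True
    then obtain \<beta> \<alpha> e where x: "x = (\<beta>,(\<alpha>,e))" and rng: "0 \<le> \<beta>" "\<beta> < P" "0 \<le> \<alpha>" "\<alpha> < P" "e = 0 \<or> e = 1"
      unfolding NC by (auto dest!: int01)
    have in1: "G a' b' t' x \<in> carrier N" using True by (rule G_in)
    have "compose (carrier N) (G a b t) (G a' b' t') x = G a b t (G a' b' t' x)"
      using True by (simp add: compose_def)
    also have "G a' b' t' x = ((a' * \<beta>) mod P, ((b' * \<alpha> + t' * e) mod P, e))"
      unfolding x using rng by (rule G_apply)
    also have "G a b t \<dots> = ((a * ((a' * \<beta>) mod P)) mod P, ((b * ((b' * \<alpha> + t' * e) mod P) + t * e) mod P, e))"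
      using rng P3 by (intro G_apply) auto
    also have "\<dots> = G (a*a') (b*b') (b*t' + t) x"
      unfolding x using rng
      by (subst G_apply) (auto simp: mod_mult_right_eq mm1 algebra_simps)
    finally show ?thesis .
  qed
qed

lemma G110: "G 1 1 0 = (\<lambda>x\<in>carrier N. x)"
  by (rule ext) (auto simp: G_def NC)

lemma G_mod: "G 1 1 m = G 1 1 (m mod P)"
  by (rule ext) (auto simp: G_def mm2)

lemma G_eval_s: "G a b m (0,(0,1)) = (0,(m mod P,1))"
  using P3 by (subst G_apply) auto

lemma G_eq_iff: "G 1 1 m = G 1 1 m' \<longleftrightarrow> m mod P = m' mod P"
proof
  assume "G 1 1 m = G 1 1 m'"
  then have "G 1 1 m (0,(0,1)) = G 1 1 m' (0,(0,1))" by simp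
  then show "m mod P = m' mod P" by (simp add: G_eval_s)
next
  assume "m mod P = m' mod P"
  then show "G 1 1 m = G 1 1 m'" by (metis G_mod)
qed

end

context L17 begin

lemma Hol_group: "group Hol" by (rule holomorph_group[OF Ngroup])

lemma pow_snd:
  assumes h: "h \<in> carrier Hol" and sh: "snd h = G a b t"
  shows "\<exists>T. snd (h [^]\<^bsub>Hol\<^esub> n) = G (a^n) (b^n) T"
proof (induction n)
  case 0
  show ?case by (intro exI[of _ 0]) (simp add: G110)
next
  case (Suc n)
  then obtain T where T: "snd (h [^]\<^bsub>Hol\<^esub> n) = G (a^n) (b^n) T" by blast
  obtain u where u: "h [^]\<^bsub>Hol\<^esub> n = (u, G (a^n) (b^n) T)" using T by (metis prod.collapse)
  obtain x where x: "h = (x, G a b t)" using sh by (metis prod.collapse)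
  have "h [^]\<^bsub>Hol\<^esub> Suc n = (u, G (a^n) (b^n) T) \<otimes>\<^bsub>Hol\<^esub> h"
    using u by simp
  also have "\<dots> = (u, G (a^n) (b^n) T) \<otimes>\<^bsub>Hol\<^esub> (x, G a b t)" using x by simp
  finally have "h [^]\<^bsub>Hol\<^esub> Suc n = (u, G (a^n) (b^n) T) \<otimes>\<^bsub>Hol\<^esub> (x, G a b t)" .
  then have "snd (h [^]\<^bsub>Hol\<^esub> Suc n) = G (a^n * a) (b^n * b) (b^n * t + T)"
    by (simp only: hol_mult snd_conv compose_G)
  then show ?case by (auto simp: mult.commute)
qed

lemma pow_mod_one:
  assumes "0 \<le> a" "a < P" "a ^ (p*p) mod P = 1"
  shows "a = 1"
proof -
  obtain na where na: "a = int na" using assms(1) by (metis nonneg_int_cases)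
  have "int (na ^ (p*p) mod p) = 1" using assms(3) na by (simp add: of_nat_mod)
  then have "na ^ (p*p) mod p = 1" by simp
  then have "na mod p = 1" using fermat_sq[OF prime] by simp
  moreover have "na < p" using assms(2) na by simp
  ultimately show ?thesis using na by simp
qed

lemma pform_auto:
  assumes h: "h \<in> carrier Hol" and hp: "h [^]\<^bsub>Hol\<^esub> (p*p) = \<one>\<^bsub>Hol\<^esub>"
  shows "\<exists>t. 0 \<le> t \<and> t < P \<and> snd h = G 1 1 t"
proof -
  have "snd h \<in> auto N" using h by auto
  then obtain a b t where abt: "snd h = G a b t" "0 \<le> a" "a < P" "0 \<le> b" "b < P" "0 \<le> t" "t < P"
    using auto_class by blast
  obtain T where T: "snd (h [^]\<^bsub>Hol\<^esub> (p*p)) = G (a^(p*p)) (b^(p*p)) T"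
    using pow_snd[OF h abt(1)] by blast
  then have eq: "G (a^(p*p)) (b^(p*p)) T = G 1 1 0" using hp by (simp add: G110)
  have 1: "(1::int) < P" using P3 by simp
  have "G (a^(p*p)) (b^(p*p)) T (1,(0,0)) = G 1 1 0 (1,(0,0))" using eq by simp
  then have "a^(p*p) mod P = 1" using 1 by (simp add: G_apply)
  then have a1: "a = 1" using abt by - (rule pow_mod_one, auto)
  have "G (a^(p*p)) (b^(p*p)) T (0,(1,0)) = G 1 1 0 (0,(1,0))" using eq by simp
  then have "b^(p*p) mod P = 1" using 1 by (simp add: G_apply)
  then have b1: "b = 1" using abt by - (rule pow_mod_one, auto)
  show ?thesis using abt a1 b1 by blast
qed

end

locale L17phi = L17 +
  fixes \<phi>
  assumes phi_auto: "\<phi> \<in> auto N" and phi_r: "\<phi> (0,(1,0)) = (0,(1,0))"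
    and phi_s: "\<phi> (0,(0,1)) = (0,(1,0)) \<otimes>\<^bsub>N\<^esub> (0,(0,1))" and phi_c: "\<phi> (1,(0,0)) = (1,(0,0))"
begin

lemma phi_G: "\<phi> = G 1 1 1"
proof -
  have "\<phi> (0,(0,1)) = (0,(1,1))" using phi_s P3 by simp
  then show ?thesis using auto_form[OF phi_auto phi_c phi_r] by simp
qed

lemma AG: "group (AutoGroup N)" using Ngroup by (rule group.AutoGroup)

lemma phi_pow: "\<phi> [^]\<^bsub>AutoGroup N\<^esub> (k::nat) = G 1 1 (int k)"
proof (induction k)
  case 0 then show ?case by (simp add: auto_one G110)
next
  case (Suc k)
  have "\<phi> [^]\<^bsub>AutoGroup N\<^esub> k \<in> auto N"
    using monoid.nat_pow_closed[OF group.is_monoid[OF AG]] phi_auto by (simp add: auto_carrier)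
  then have "\<phi> [^]\<^bsub>AutoGroup N\<^esub> Suc k = compose (carrier N) (G 1 1 (int k)) (G 1 1 1)"
    using Suc phi_auto by (simp add: auto_mult phi_G[symmetric])
  also have "\<dots> = G 1 1 (int (Suc k))" by (simp only: compose_G) simp
  finally show ?case .
qed

lemma G11_auto: "G 1 1 m \<in> auto N"
proof -
  have "G 1 1 m = G 1 1 (int (nat (m mod P)))" using G_mod P3 by simp
  also have "\<dots> = \<phi> [^]\<^bsub>AutoGroup N\<^esub> (nat (m mod P))" by (simp add: phi_pow)
  also have "\<dots> \<in> auto N"
    using monoid.nat_pow_closed[OF group.is_monoid[OF AG]] phi_auto by (simp add: auto_carrier)
  finally show ?thesis .
qed

lemma hol_mult_G: "(x, G a b t) \<otimes>\<^bsub>Hol\<^esub> (y, G a' b' t') = (x \<otimes>\<^bsub>N\<^esub> G a b t y, G (a*a') (b*b') (b*t'+t))"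
  by (subst hol_mult) (subst compose_G, rule refl)

lemma parity:
  assumes h: "h \<in> carrier Hol" and hp: "h [^]\<^bsub>Hol\<^esub> (p*p) = \<one>\<^bsub>Hol\<^esub>" and sh: "snd h = G 1 1 t"
  shows "\<exists>\<beta> \<alpha>. 0 \<le> \<beta> \<and> \<beta> < P \<and> 0 \<le> \<alpha> \<and> \<alpha> < P \<and> h = ((\<beta>,(\<alpha>,0)), G 1 1 t)"
proof -
  interpret H: group Hol by (rule Hol_group)
  define W where "W = {h \<in> carrier Hol. snd (snd (fst h)) = 0 \<and> (\<exists>m. snd h = G 1 1 m)}"
  have Wform: "\<exists>\<beta> \<alpha> m. g = ((\<beta>,(\<alpha>,0)), G 1 1 m)" if gw: "g \<in> W" for g
  proof -
    obtain m where "snd g = G 1 1 m" "snd (snd (fst g)) = 0" using gw unfolding W_def by auto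
    then show ?thesis by (cases g) auto
  qed
  have Wm: "h1 \<otimes>\<^bsub>Hol\<^esub> h2 \<in> W" if w1: "h1 \<in> W" and w2: "h2 \<in> W" for h1 h2
  proof -
    obtain \<beta>1 \<alpha>1 m1 where h1: "h1 = ((\<beta>1,(\<alpha>1,0)), G 1 1 m1)"
      using Wform[OF w1] by blast
    obtain \<beta>2 \<alpha>2 m2 where h2: "h2 = ((\<beta>2,(\<alpha>2,0)), G 1 1 m2)"
      using Wform[OF w2] by blast
    have "h2 \<in> carrier Hol" using w2 unfolding W_def by blast
    then have "(\<beta>2,(\<alpha>2,0)) \<in> carrier N" unfolding h2 by simp
    then have r2: "0 \<le> \<beta>2" "\<beta>2 < P" "0 \<le> \<alpha>2" "\<alpha>2 < P" by (simp_all add: inNC)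
    have "h1 \<otimes>\<^bsub>Hol\<^esub> h2 = ((\<beta>1,(\<alpha>1,0)) \<otimes>\<^bsub>N\<^esub> G 1 1 m1 (\<beta>2,(\<alpha>2,0)), G 1 1 (1*m2 + m1))"
      unfolding h1 h2 hol_mult_G by simp
    also have "G 1 1 m1 (\<beta>2,(\<alpha>2,0)) = (\<beta>2 mod P, (\<alpha>2 mod P, 0))" using r2 by (simp add: G_apply)
    finally have "h1 \<otimes>\<^bsub>Hol\<^esub> h2 = (((\<beta>1 + \<beta>2 mod P) mod P, ((\<alpha>1 + \<alpha>2 mod P) mod P, 0)), G 1 1 (1*m2 + m1))"
      by simp
    moreover have "h1 \<otimes>\<^bsub>Hol\<^esub> h2 \<in> carrier Hol"
    proof -
      have "h1 \<in> carrier Hol" "h2 \<in> carrier Hol" using w1 w2 unfolding W_def by blast+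
      then show ?thesis by (rule H.m_closed)
    qed
    ultimately show ?thesis unfolding W_def by auto
  qed
  have W1: "\<one>\<^bsub>Hol\<^esub> \<in> W"
  proof -
    have o: "\<one>\<^bsub>Hol\<^esub> = ((0,(0,0)), G 1 1 0)" by (simp only: hol_one G110 None)
    have "((0::int,(0::int,0::int)), G 1 1 0) \<in> carrier Hol" using G11_auto P3 by simp
    then show ?thesis unfolding W_def o by auto
  qed
  have hh: "h \<otimes>\<^bsub>Hol\<^esub> h \<in> W"
  proof -
    obtain x where x: "h = (x, G 1 1 t)" using sh by (metis prod.collapse)
    have xin: "x \<in> carrier N" using h x by auto
    then obtain \<beta> \<alpha> e where xx: "x = (\<beta>,(\<alpha>,e))" and rng: "0 \<le> \<beta>" "\<beta> < P" "0 \<le> \<alpha>" "\<alpha> < P" "e = 0 \<or> e = 1"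
      unfolding NC by (auto dest!: int01)
    have "h \<otimes>\<^bsub>Hol\<^esub> h = (x \<otimes>\<^bsub>N\<^esub> G 1 1 t x, G 1 1 (1*t + t))"
      unfolding x by (simp only: hol_mult compose_G; simp)
    also have "G 1 1 t x = (\<beta> mod P, ((\<alpha> + t * e) mod P, e))" unfolding xx using rng by (subst G_apply) auto
    finally have "snd (snd (fst (h \<otimes>\<^bsub>Hol\<^esub> h))) = 0" using rng xx by auto
    moreover have "h \<otimes>\<^bsub>Hol\<^esub> h \<in> carrier Hol" using h h by (rule H.m_closed)
    moreover have "\<exists>m. snd (h \<otimes>\<^bsub>Hol\<^esub> h) = G 1 1 m" unfolding x hol_mult_G by auto
    ultimately show ?thesis unfolding W_def by auto
  qed
  have Wpow: "(h \<otimes>\<^bsub>Hol\<^esub> h) [^]\<^bsub>Hol\<^esub> (j::nat) \<in> W" for j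
  proof (induction j)
    case 0 show ?case using W1 by (simp only: nat_pow_0)
  next
    case (Suc j) show ?case by (simp only: nat_pow_Suc) (rule Wm[OF Suc hh])
  qed
  have "even (p * p + 1)" using odd by simp
  then obtain k where k: "p * p + 1 = 2 * k" by (rule evenE)
  have "h = h [^]\<^bsub>Hol\<^esub> (p*p) \<otimes>\<^bsub>Hol\<^esub> h" by (simp only: hp H.l_one[OF h])
  also have "\<dots> = h [^]\<^bsub>Hol\<^esub> (2*k)" using k by (metis H.nat_pow_Suc Suc_eq_plus1)
  also have "\<dots> = (h [^]\<^bsub>Hol\<^esub> (2::nat)) [^]\<^bsub>Hol\<^esub> k" using h by (simp add: H.nat_pow_pow)
  also have "h [^]\<^bsub>Hol\<^esub> (2::nat) = h \<otimes>\<^bsub>Hol\<^esub> h" by (simp only: numeral_2_eq_2 nat_pow_Suc nat_pow_0 H.l_one[OF h])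
  finally have hk: "h = (h \<otimes>\<^bsub>Hol\<^esub> h) [^]\<^bsub>Hol\<^esub> k" .
  have "h \<in> W" by (subst hk) (rule Wpow)
  then show ?thesis using sh unfolding W_def by (cases h) (auto simp: inNC)
qed

end

context L17phi begin

definition E :: "int \<Rightarrow> int \<Rightarrow> int \<Rightarrow> (int \<times> int \<times> int) \<times> (int \<times> int \<times> int \<Rightarrow> int \<times> int \<times> int)" where
  "E \<beta> \<alpha> m = ((\<beta> mod P, (\<alpha> mod P, 0)), G 1 1 m)"

lemma Ppos: "P > 0" using P3 by simp

lemma E_carrier: "E \<beta> \<alpha> m \<in> carrier Hol"
  using G11_auto Ppos by (simp add: E_def)

lemma E_mult: "E \<beta> \<alpha> m \<otimes>\<^bsub>Hol\<^esub> E \<beta>' \<alpha>' m' = E (\<beta>+\<beta>') (\<alpha>+\<alpha>') (m+m')"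
proof -
  have "G 1 1 m (\<beta>' mod P, (\<alpha>' mod P, 0)) = (\<beta>' mod P, (\<alpha>' mod P, 0))"
    using Ppos by (subst G_apply) auto
  then show ?thesis unfolding E_def hol_mult_G by (simp add: mod_add_eq add.commute)
qed

lemma E_one: "\<one>\<^bsub>Hol\<^esub> = E 0 0 0"
  unfolding E_def by (simp only: hol_one G110 None) simp

lemma E_eq: "E \<beta> \<alpha> m = E \<beta>' \<alpha>' m' \<longleftrightarrow> \<beta> mod P = \<beta>' mod P \<and> \<alpha> mod P = \<alpha>' mod P \<and> m mod P = m' mod P"
  unfolding E_def using G_eq_iff by auto

lemma E_inv: "inv\<^bsub>Hol\<^esub> (E \<beta> \<alpha> m) = E (-\<beta>) (-\<alpha>) (-m)"
proof -
  interpret H: group Hol by (rule Hol_group)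
  show ?thesis
    by (rule H.inv_equality[OF _ E_carrier E_carrier]) (simp del: hol_one add: E_mult E_one)
qed

lemma E_act: "(b,(a,e)) \<in> carrier N \<Longrightarrow>
   hol_act N (E \<beta> \<alpha> m) (b,(a,e)) = (((\<beta> mod P) + b) mod P, ((\<alpha> mod P + (a + m*e) mod P) mod P, e))"
proof -
  assume "(b,(a,e)) \<in> carrier N"
  then have r: "0 \<le> b" "b < P" "0 \<le> a" "a < P" "e = 0 \<or> e = 1" by (auto simp: inNC)
  then have "G 1 1 m (b,(a,e)) = (b, ((a + m*e) mod P, e))" by (subst G_apply) auto
  then show ?thesis unfolding hol_act_def E_def using r by auto
qed

lemma mod_lin: "(k*(a mod P) + l*(b mod P)) mod P = (k*a + l*b) mod P"
proof -
  have "(k*(a mod P) + l*(b mod P)) mod P = (k*(a mod P) + l*b) mod P" by (rule mm1)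
  also have "\<dots> = (l*b + k*(a mod P)) mod P" by (simp add: add.commute)
  also have "\<dots> = (l*b + k*a) mod P" by (rule mm1)
  finally show ?thesis by (simp add: add.commute)
qed

definition S :: "int \<Rightarrow> int \<Rightarrow> _ set" where
  "S k l = {E \<beta> \<alpha> (k*\<alpha> + l*\<beta>) | \<beta> \<alpha>. True}"

lemma S_subgroup: "subgroup (S k l) Hol"
proof -
  interpret H: group Hol by (rule Hol_group)
  show ?thesis
  proof (rule H.subgroupI)
    show "S k l \<subseteq> carrier Hol" unfolding S_def using E_carrier by (auto simp del: hol_carrier)
    show "S k l \<noteq> {}" unfolding S_def by blast
  next
    fix a assume "a \<in> S k l"
    then obtain \<beta> \<alpha> where a: "a = E \<beta> \<alpha> (k*\<alpha> + l*\<beta>)" unfolding S_def by auto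
    have "inv\<^bsub>Hol\<^esub> a = E (-\<beta>) (-\<alpha>) (k*(-\<alpha>) + l*(-\<beta>))" unfolding a E_inv by (simp add: algebra_simps)
    then show "inv\<^bsub>Hol\<^esub> a \<in> S k l" unfolding S_def by blast
  next
    fix a b assume "a \<in> S k l" "b \<in> S k l"
    then obtain \<beta> \<alpha> \<beta>' \<alpha>' where a: "a = E \<beta> \<alpha> (k*\<alpha> + l*\<beta>)" and b: "b = E \<beta>' \<alpha>' (k*\<alpha>' + l*\<beta>')"
      unfolding S_def by auto
    have "a \<otimes>\<^bsub>Hol\<^esub> b = E (\<beta>+\<beta>') (\<alpha>+\<alpha>') (k*(\<alpha>+\<alpha>') + l*(\<beta>+\<beta>'))" unfolding a b E_mult by (simp add: algebra_simps)
    then show "a \<otimes>\<^bsub>Hol\<^esub> b \<in> S k l" unfolding S_def by blast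
  qed
qed

lemma gen_eq: "generate Hol {E 0 1 k, E 1 0 l} = S k l"
proof -
  interpret H: group Hol by (rule Hol_group)
  let ?g = "generate Hol {E 0 1 k, E 1 0 l}"
  show ?thesis
  proof
    show "?g \<subseteq> S k l"
    proof (rule H.generate_subgroup_incl[OF _ S_subgroup])
      have "E 0 1 k = E 0 1 (k*1 + l*0)" by simp
      moreover have "E 1 0 l = E 1 0 (k*0 + l*1)" by simp
      ultimately show "{E 0 1 k, E 1 0 l} \<subseteq> S k l" unfolding S_def by blast
    qed
  next
    have g1: "E 0 1 k \<in> ?g" and g2: "E 1 0 l \<in> ?g" by (auto intro: generate.incl)
    have A: "E 0 (int a) (k * int a) \<in> ?g" for a :: nat
    proof (induction a)
      case 0 show ?case using generate.one[of Hol] by (simp del: hol_one add: E_one)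
    next
      case (Suc a)
      have "E 0 1 k \<otimes>\<^bsub>Hol\<^esub> E 0 (int a) (k * int a) \<in> ?g" using g1 Suc by (rule generate.eng)
      moreover have "E 0 1 k \<otimes>\<^bsub>Hol\<^esub> E 0 (int a) (k * int a) = E 0 (int (Suc a)) (k * int (Suc a))"
        by (simp add: E_mult algebra_simps)
      ultimately show ?case by simp
    qed
    have B: "E (int b) (int a) (k * int a + l * int b) \<in> ?g" for a b :: nat
    proof (induction b)
      case 0 show ?case using A by simp
    next
      case (Suc b)
      have "E 1 0 l \<otimes>\<^bsub>Hol\<^esub> E (int b) (int a) (k * int a + l * int b) \<in> ?g" using g2 Suc by (rule generate.eng)
      moreover have "E 1 0 l \<otimes>\<^bsub>Hol\<^esub> E (int b) (int a) (k * int a + l * int b) = E (int (Suc b)) (int a) (k * int a + l * int (Suc b))"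
        by (simp add: E_mult algebra_simps)
      ultimately show ?case by simp
    qed
    show "S k l \<subseteq> ?g"
    proof
      fix x assume "x \<in> S k l"
      then obtain \<beta> \<alpha> where x: "x = E \<beta> \<alpha> (k*\<alpha> + l*\<beta>)" unfolding S_def by auto
      define b where "b = nat (\<beta> mod P)"
      define a where "a = nat (\<alpha> mod P)"
      have bb: "int b = \<beta> mod P" and aa: "int a = \<alpha> mod P" using Ppos by (auto simp: a_def b_def)
      have "x = E (int b) (int a) (k * int a + l * int b)"
        unfolding x E_eq bb aa by (simp add: mod_lin)
      then show "x \<in> ?g" using B by simp
    qed
  qed
qed

end

context L17phi begin

abbreviation "T \<equiv> {0..<P} \<times> {0..<P}"

lemma card_T: "card T = p * p"
  by (simp add: card_cartesian_product)

lemma mod_in: "0 \<le> x mod P" "x mod P < P" using Ppos by auto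

lemma S_elem: "E \<beta> \<alpha> (k*\<alpha> + l*\<beta>) = E (\<beta> mod P) (\<alpha> mod P) (k*(\<alpha> mod P) + l*(\<beta> mod P))"
  unfolding E_eq by (simp add: mod_lin)

lemma S_bij: "bij_betw (\<lambda>(\<beta>,\<alpha>). E \<beta> \<alpha> (k*\<alpha> + l*\<beta>)) T (S k l)"
proof (rule bij_betwI')
  fix x y assume "x \<in> T" "y \<in> T"
  then show "((\<lambda>(\<beta>,\<alpha>). E \<beta> \<alpha> (k*\<alpha> + l*\<beta>)) x = (\<lambda>(\<beta>,\<alpha>). E \<beta> \<alpha> (k*\<alpha> + l*\<beta>)) y) = (x = y)"
    by (cases x; cases y) (auto simp: E_eq)
next
  fix x assume "x \<in> T" then show "(\<lambda>(\<beta>,\<alpha>). E \<beta> \<alpha> (k*\<alpha> + l*\<beta>)) x \<in> S k l"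
    unfolding S_def by (cases x) auto
next
  fix y assume "y \<in> S k l"
  then obtain \<beta> \<alpha> where y: "y = E \<beta> \<alpha> (k*\<alpha> + l*\<beta>)" unfolding S_def by auto
  show "\<exists>x\<in>T. y = (\<lambda>(\<beta>,\<alpha>). E \<beta> \<alpha> (k*\<alpha> + l*\<beta>)) x"
    using mod_in by (intro bexI[of _ "(\<beta> mod P, \<alpha> mod P)"]) (auto simp: y S_elem[of \<beta> \<alpha> k l])
qed

lemma S_card: "card (S k l) = p * p"
  using bij_betw_same_card[OF S_bij] card_T by simp

lemma S_finite: "finite (S k l)"
  using bij_betw_finite[OF S_bij] by simp

definition pr :: "(int \<times> int \<times> int) \<times> (int \<times> int \<times> int \<Rightarrow> int \<times> int \<times> int) \<Rightarrow> int \<times> int" where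
  "pr h = (fst (fst h), fst (snd (fst h)))"

lemma pr_E[simp]: "pr (E \<beta> \<alpha> m) = (\<beta> mod P, \<alpha> mod P)" by (simp add: pr_def E_def)

lemma S_iso: "Hol\<lparr>carrier := S k l\<rparr> \<cong> integer_mod_group p \<times>\<times> integer_mod_group p"
proof (rule is_isoI)
  show "pr \<in> iso (Hol\<lparr>carrier := S k l\<rparr>) (integer_mod_group p \<times>\<times> integer_mod_group p)"
    unfolding iso_def
  proof (intro CollectI conjI)
    show "pr \<in> hom (Hol\<lparr>carrier := S k l\<rparr>) (integer_mod_group p \<times>\<times> integer_mod_group p)"
    proof (rule homI)
      fix x assume "x \<in> carrier (Hol\<lparr>carrier := S k l\<rparr>)"
      then obtain \<beta> \<alpha> where "x = E \<beta> \<alpha> (k*\<alpha> + l*\<beta>)" unfolding S_def by auto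
      then show "pr x \<in> carrier (integer_mod_group p \<times>\<times> integer_mod_group p)" using mod_in by simp
    next
      fix x y assume "x \<in> carrier (Hol\<lparr>carrier := S k l\<rparr>)" "y \<in> carrier (Hol\<lparr>carrier := S k l\<rparr>)"
      then obtain \<beta> \<alpha> \<beta>' \<alpha>' where x: "x = E \<beta> \<alpha> (k*\<alpha> + l*\<beta>)" and y: "y = E \<beta>' \<alpha>' (k*\<alpha>' + l*\<beta>')"
        unfolding S_def by auto
      show "pr (x \<otimes>\<^bsub>Hol\<lparr>carrier := S k l\<rparr>\<^esub> y) = pr x \<otimes>\<^bsub>integer_mod_group p \<times>\<times> integer_mod_group p\<^esub> pr y"
        unfolding x y by (simp add: E_mult mod_add_eq)
    qed
  next
    have "bij_betw pr (S k l) T"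
    proof (rule bij_betw_imageI)
      show "inj_on pr (S k l)"
      proof (rule inj_onI)
        fix x y assume "x \<in> S k l" "y \<in> S k l" "pr x = pr y"
        then obtain \<beta> \<alpha> \<beta>' \<alpha>' where x: "x = E \<beta> \<alpha> (k*\<alpha> + l*\<beta>)" and y: "y = E \<beta>' \<alpha>' (k*\<alpha>' + l*\<beta>')"
          and e: "\<beta> mod P = \<beta>' mod P" "\<alpha> mod P = \<alpha>' mod P" unfolding S_def by auto
        show "x = y" unfolding x y by (subst (1 2) S_elem) (simp add: e)
      qed
      show "pr ` S k l = T"
      proof
        show "pr ` S k l \<subseteq> T" unfolding S_def using mod_in by auto
        show "T \<subseteq> pr ` S k l"
        proof
          fix z assume z: "z \<in> T"
          then obtain \<beta> \<alpha> where z': "z = (\<beta>,\<alpha>)" "0 \<le> \<beta>" "\<beta> < P" "0 \<le> \<alpha>" "\<alpha> < P" by auto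
          have "E \<beta> \<alpha> (k*\<alpha> + l*\<beta>) \<in> S k l" unfolding S_def by blast
          moreover have "pr (E \<beta> \<alpha> (k*\<alpha> + l*\<beta>)) = z" using z' by simp
          ultimately show "z \<in> pr ` S k l" by force
        qed
      qed
    qed
    then show "bij_betw pr (carrier (Hol\<lparr>carrier := S k l\<rparr>)) (carrier (integer_mod_group p \<times>\<times> integer_mod_group p))"
      by simp
  qed
qed

end

context L17phi begin

lemma fix_dvd: "0 \<le> y \<Longrightarrow> y < P \<Longrightarrow> (x + y) mod P = y \<Longrightarrow> P dvd x"
proof -
  assume a: "0 \<le> y" "y < P" "(x + y) mod P = y"
  then have "(x + y) mod P = y mod P" by simp
  then have "P dvd (x + y) - y" by (simp only: mod_eq_dvd_iff)
  then show "P dvd x" by simp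
qed

lemma dvd_mod0: "P dvd x \<longleftrightarrow> x mod P = 0" by (simp add: dvd_eq_mod_eq_0)

lemma S_semireg:
  assumes k: "k mod P \<noteq> P - 1"
  shows "semiregular N (S k l)"
  unfolding semiregular_def
proof (intro ballI impI)
  fix n h assume n: "n \<in> carrier N" and h: "h \<in> S k l" and fx: "hol_act N h n = n"
  obtain \<beta> \<alpha> where hE: "h = E \<beta> \<alpha> (k*\<alpha> + l*\<beta>)" using h unfolding S_def by auto
  obtain b a e where nn: "n = (b,(a,e))" and r: "0 \<le> b" "b < P" "0 \<le> a" "a < P" "e = 0 \<or> e = 1"
    using n unfolding NC by (auto dest!: int01)
  have act: "hol_act N h n = (((\<beta> mod P) + b) mod P, ((\<alpha> mod P + (a + (k*\<alpha> + l*\<beta>)*e) mod P) mod P, e))"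
    unfolding hE nn by (rule E_act) (use n nn in simp)
  have eq1: "((\<beta> mod P) + b) mod P = b" using fx act nn by simp
  have "P dvd (\<beta> mod P)" by (rule fix_dvd[OF r(1) r(2) eq1])
  then have b0: "\<beta> mod P = 0" by (simp add: dvd_mod0)
  have "(\<alpha> mod P + (a + (k*\<alpha> + l*\<beta>)*e) mod P) mod P = a" using fx act nn by simp
  then have eq2: "(\<alpha> + (k*\<alpha> + l*\<beta>)*e + a) mod P = a" by (simp add: mod_add_eq algebra_simps)
  have d: "P dvd \<alpha> + (k*\<alpha> + l*\<beta>)*e" by (rule fix_dvd[OF r(3) r(4) eq2])
  have pb: "P dvd \<beta>" using b0 by (simp add: dvd_mod0)
  have a0: "\<alpha> mod P = 0"
  proof (cases "e = 0")
    case True then show ?thesis using d by (simp add: dvd_mod0)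
  next
    case False
    then have e1: "e = 1" using r by auto
    have d1: "P dvd (\<alpha> + (k*\<alpha> + l*\<beta>))" using d e1 by simp
    have "P dvd (\<alpha> + (k*\<alpha> + l*\<beta>)) - l * \<beta>" by (rule dvd_diff[OF d1 dvd_mult[OF pb]])
    then have "P dvd (1 + k) * \<alpha>" by (simp add: algebra_simps)
    then have "P dvd (1 + k) \<or> P dvd \<alpha>" using Pprime prime_dvd_mult_iff by blast
    moreover have "\<not> P dvd (1 + k)"
    proof
      assume "P dvd (1 + k)"
      then have "(1 + k) mod P = 0" by (simp add: dvd_mod0)
      then have "(1 + k mod P) mod P = 0" by (simp add: mod_add_right_eq)
      moreover have "0 \<le> k mod P" "k mod P < P" using mod_in by auto
      moreover have "k mod P < P - 1" using k mod_in(2)[of k] by linarith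
      ultimately have "(1 + k mod P) mod P = 1 + k mod P" by (intro mod_pos_pos_trivial) linarith+
      with \<open>(1 + k mod P) mod P = 0\<close> \<open>0 \<le> k mod P\<close> show False by linarith
    qed
    ultimately show ?thesis by (simp add: dvd_mod0)
  qed
  have "h = E 0 0 0" unfolding hE E_eq using b0 a0 mod_lin[of k \<alpha> l \<beta>] by simp
  then show "h = \<one>\<^bsub>Hol\<^esub>" by (simp only: E_one)
qed

lemma S_inj: assumes "S k l = S k' l'" shows "k mod P = k' mod P \<and> l mod P = l' mod P"
proof -
  have "E 0 1 (k*1 + l*0) \<in> S k l" unfolding S_def by blast
  then have "E 0 1 k \<in> S k' l'" using assms by simp
  then obtain \<beta> \<alpha> where e1: "E 0 1 k = E \<beta> \<alpha> (k'*\<alpha> + l'*\<beta>)" unfolding S_def by auto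
  have "E 1 0 (k*0 + l*1) \<in> S k l" unfolding S_def by blast
  then have "E 1 0 l \<in> S k' l'" using assms by simp
  then obtain \<beta>' \<alpha>' where e2: "E 1 0 l = E \<beta>' \<alpha>' (k'*\<alpha>' + l'*\<beta>')" unfolding S_def by auto
  have P1: "1 mod P = 1" using P3 by simp
  from e1 have "\<beta> mod P = 0" "\<alpha> mod P = 1" "k mod P = (k'*\<alpha> + l'*\<beta>) mod P" unfolding E_eq using P1 by auto
  then have "k mod P = k' mod P" using mod_lin[of k' \<alpha> l' \<beta>] by simp
  moreover from e2 have "\<beta>' mod P = 1" "\<alpha>' mod P = 0" "l mod P = (k'*\<alpha>' + l'*\<beta>') mod P" unfolding E_eq using P1 by auto
  then have "l mod P = l' mod P" using mod_lin[of k' \<alpha>' l' \<beta>'] by simp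
  ultimately show ?thesis by simp
qed

end

context L17phi begin

lemma converse:
  assumes sub: "subgroup H Hol" and sr: "semiregular N H" and cH: "card H = p * p"
  shows "\<exists>k l. 0 \<le> k \<and> k \<le> P - 2 \<and> 0 \<le> l \<and> l \<le> P - 1 \<and> H = S k l"
proof -
  interpret Hg: group Hol by (rule Hol_group)
  have fin: "finite H" using cH p0 by (metis card_gt_0_iff mult_pos_pos not_gr0)
  have grpH: "group (Hol\<lparr>carrier := H\<rparr>)" by (rule Hg.subgroup_imp_group[OF sub])
  have ord: "order (Hol\<lparr>carrier := H\<rparr>) = p * p" by (simp add: order_def cH)
  have Hsub: "H \<subseteq> carrier Hol" using sub by (rule subgroup.subset)
  have pw: "h [^]\<^bsub>Hol\<^esub> (p*p) = \<one>\<^bsub>Hol\<^esub>" if hH: "h \<in> H" for h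
  proof -
    have "h [^]\<^bsub>Hol\<lparr>carrier := H\<rparr>\<^esub> (p*p) = \<one>\<^bsub>Hol\<lparr>carrier := H\<rparr>\<^esub>"
      using group.pow_order_eq_1[OF grpH, of h] hH ord by simp
    then show ?thesis by (simp add: Hg.nat_pow_consistent[symmetric])
  qed
  have form: "\<exists>\<beta> \<alpha> t. 0 \<le> \<beta> \<and> \<beta> < P \<and> 0 \<le> \<alpha> \<and> \<alpha> < P \<and> 0 \<le> t \<and> t < P \<and> h = E \<beta> \<alpha> t" if hH: "h \<in> H" for h
  proof -
    have hc: "h \<in> carrier Hol" using hH Hsub by blast
    obtain t where t: "0 \<le> t" "t < P" "snd h = G 1 1 t" using pform_auto[OF hc pw[OF hH]] by blast
    obtain \<beta> \<alpha> where ba: "0 \<le> \<beta>" "\<beta> < P" "0 \<le> \<alpha>" "\<alpha> < P" "h = ((\<beta>,(\<alpha>,0)), G 1 1 t)"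
      using parity[OF hc pw[OF hH] t(3)] by blast
    have "h = E \<beta> \<alpha> t" using ba by (simp add: E_def)
    then show ?thesis using ba t by blast
  qed
  have one_crit: "t mod P = 0" if "E \<beta> \<alpha> t \<in> H" "\<beta> mod P = 0" "\<alpha> mod P = 0" for \<beta> \<alpha> t
  proof -
    have n: "(0,(0,0)) \<in> carrier N" using Ppos by (simp add: inNC)
    have "hol_act N (E \<beta> \<alpha> t) (0,(0,0)) = (0,(0,0))" using that by (simp add: E_act[OF n])
    then have "E \<beta> \<alpha> t = \<one>\<^bsub>Hol\<^esub>" using sr n that(1) unfolding semiregular_def by blast
    then have "E \<beta> \<alpha> t = E 0 0 0" by (simp only: E_one)
    then show ?thesis by (simp add: E_eq)
  qed
  have s_crit: "\<alpha> mod P = 0" if "E \<beta> \<alpha> t \<in> H" "\<beta> mod P = 0" "(\<alpha> + t) mod P = 0" for \<beta> \<alpha> t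
  proof -
    have n: "(0,(0,1)) \<in> carrier N" using Ppos by (simp add: inNC)
    have "(\<alpha> mod P + t mod P) mod P = 0" using that(3) by (simp add: mod_add_eq)
    then have "hol_act N (E \<beta> \<alpha> t) (0,(0,1)) = (0,(0,1))" using that by (simp add: E_act[OF n])
    then have "E \<beta> \<alpha> t = \<one>\<^bsub>Hol\<^esub>" using sr n that(1) unfolding semiregular_def by blast
    then have "E \<beta> \<alpha> t = E 0 0 0" by (simp only: E_one)
    then show ?thesis by (simp add: E_eq)
  qed
  have inj: "inj_on pr H"
  proof (rule inj_onI)
    fix h1 h2 assume h1H: "h1 \<in> H" and h2H: "h2 \<in> H" and eq: "pr h1 = pr h2"
    obtain \<beta> \<alpha> t1 where f1: "0 \<le> \<beta>" "\<beta> < P" "0 \<le> \<alpha>" "\<alpha> < P" "h1 = E \<beta> \<alpha> t1" using form[OF h1H] by blast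
    obtain \<beta>' \<alpha>' t2 where f2: "0 \<le> \<beta>'" "\<beta>' < P" "0 \<le> \<alpha>'" "\<alpha>' < P" "h2 = E \<beta>' \<alpha>' t2" using form[OF h2H] by blast
    have bb: "\<beta> = \<beta>'" "\<alpha> = \<alpha>'" using eq f1 f2 by auto
    have "h1 \<otimes>\<^bsub>Hol\<^esub> inv\<^bsub>Hol\<^esub> h2 \<in> H"
      using h1H h2H sub by (simp add: subgroup.m_closed subgroup.m_inv_closed)
    moreover have "h1 \<otimes>\<^bsub>Hol\<^esub> inv\<^bsub>Hol\<^esub> h2 = E 0 0 (t1 - t2)"
      unfolding f1(5) f2(5) E_inv E_mult bb by (simp add: E_eq)
    ultimately have "E 0 0 (t1 - t2) \<in> H" by simp
    then have "(t1 - t2) mod P = 0" by (rule one_crit) auto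
    then have "t1 mod P = t2 mod P" by (simp add: mod_eq_dvd_iff dvd_mod0[symmetric])
    then show "h1 = h2" unfolding f1(5) f2(5) bb by (simp add: E_eq)
  qed
  have prH: "pr ` H = T"
  proof (rule card_subset_eq)
    show "finite T" by simp
    show "pr ` H \<subseteq> T"
    proof
      fix z assume "z \<in> pr ` H"
      then obtain h where hH: "h \<in> H" and z: "z = pr h" by auto
      obtain \<beta> \<alpha> t where "0 \<le> \<beta>" "\<beta> < P" "0 \<le> \<alpha>" "\<alpha> < P" "h = E \<beta> \<alpha> t" using form[OF hH] by blast
      then show "z \<in> T" using z by simp
    qed
    show "card (pr ` H) = card T" using card_image[OF inj] cH card_T by simp
  qed
  have P1: "1 mod P = 1" "(1::int) < P" using P3 by auto
  have "(0,1) \<in> T" using P1 by simp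
  then have "(0,1) \<in> pr ` H" using prH by simp
  then obtain h1 where h1H: "h1 \<in> H" and pr1: "(0,1) = pr h1" by (rule imageE)
  obtain \<beta> \<alpha> k where f1: "0 \<le> \<beta>" "\<beta> < P" "0 \<le> \<alpha>" "\<alpha> < P" "0 \<le> k" "k < P" "h1 = E \<beta> \<alpha> k"
    using form[OF h1H] by blast
  have "pr h1 = (\<beta>, \<alpha>)" using f1 by simp
  then have "\<beta> = 0" "\<alpha> = 1" using pr1 by simp_all
  then have g1: "E 0 1 k \<in> H" using f1(7) h1H by simp
  have "(1,0) \<in> T" using P1 by simp
  then have "(1,0) \<in> pr ` H" using prH by simp
  then obtain h2 where h2H: "h2 \<in> H" and pr2: "(1,0) = pr h2" by (rule imageE)
  obtain \<beta>' \<alpha>' l where f2: "0 \<le> \<beta>'" "\<beta>' < P" "0 \<le> \<alpha>'" "\<alpha>' < P" "0 \<le> l" "l < P" "h2 = E \<beta>' \<alpha>' l"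
    using form[OF h2H] by blast
  have "pr h2 = (\<beta>', \<alpha>')" using f2 by simp
  then have "\<beta>' = 1" "\<alpha>' = 0" using pr2 by simp_all
  then have g2: "E 1 0 l \<in> H" using f2(7) h2H by simp
  have kP: "k \<noteq> P - 1"
  proof
    assume "k = P - 1"
    then have "(1 + k) mod P = 0" by simp
    then have "1 mod P = 0" using s_crit[of 0 1 k] g1 by simp
    then show False using P1 by simp
  qed
  have "S k l = generate Hol {E 0 1 k, E 1 0 l}" by (simp add: gen_eq)
  also have "\<dots> \<subseteq> H" using g1 g2 by (intro Hg.generate_subgroup_incl[OF _ sub]) auto
  finally have SH: "S k l \<subseteq> H" .
  have "S k l = H" by (rule card_subset_eq[OF fin SH]) (simp add: S_card cH)
  then show ?thesis using f1 f2 kP by (intro exI[of _ k] exI[of _ l]) auto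
qed

end

theorem lemma17:
  fixes p :: nat and \<phi> :: "int \<times> (int \<times> int) \<Rightarrow> int \<times> (int \<times> int)"
  defines "N \<equiv> integer_mod_group p \<times>\<times> dihedral_group p"
  defines "c \<equiv> (1::int, (0::int, 0::int))"
  defines "r \<equiv> (0::int, (1::int, 0::int))"
  defines "s \<equiv> (0::int, (0::int, 1::int))"
  defines "A \<equiv> (\<lambda>k l. generate (holomorph N)
                  {(r, \<phi> [^]\<^bsub>AutoGroup N\<^esub> (k::nat)), (c, \<phi> [^]\<^bsub>AutoGroup N\<^esub> (l::nat))})"
  assumes "Factorial_Ring.prime p" and "odd p"
    and "\<phi> \<in> auto N"
    and "\<phi> r = r" and "\<phi> s = r \<otimes>\<^bsub>N\<^esub> s" and "\<phi> c = c"
  shows "(\<forall>k l. k \<le> p - 2 \<and> l \<le> p - 1 \<longrightarrow>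
            (holomorph N)\<lparr>carrier := A k l\<rparr> \<cong> integer_mod_group p \<times>\<times> integer_mod_group p)
       \<and> card {A k l | k l. k \<le> p - 2 \<and> l \<le> p - 1} = p ^ 2 - p
       \<and> {H. subgroup H (holomorph N) \<and> semiregular N H \<and> card H = p ^ 2}
           = {A k l | k l. k \<le> p - 2 \<and> l \<le> p - 1}"
proof -
  have NN: "N = integer_mod_group p \<times>\<times> dihedral_group p" using N_def by simp
  have pr: "Factorial_Ring.prime p" and od: "odd p" using assms by auto
  have ph: "\<phi> \<in> auto (integer_mod_group p \<times>\<times> dihedral_group p)"
    "\<phi> (0,(1,0)) = (0,(1,0))"
    "\<phi> (0,(0,1)) = (0,(1,0)) \<otimes>\<^bsub>integer_mod_group p \<times>\<times> dihedral_group p\<^esub> (0,(0,1))"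
    "\<phi> (1,(0,0)) = (1,(0,0))"
    using assms by (simp_all add: NN r_def s_def c_def)
  interpret L: L17phi p \<phi>
    by unfold_locales (use pr od ph in auto)
  have P1: "(1::int) mod int p = 1" using L.P3 by simp
  have AS: "A k l = L.S (int k) (int l)" for k l
  proof -
    have "(r, \<phi> [^]\<^bsub>AutoGroup N\<^esub> k) = L.E 0 1 (int k)"
      unfolding r_def NN L.phi_pow L.E_def using P1 by simp
    moreover have "(c, \<phi> [^]\<^bsub>AutoGroup N\<^esub> l) = L.E 1 0 (int l)"
      unfolding c_def NN L.phi_pow L.E_def using P1 by simp
    ultimately show ?thesis unfolding A_def NN by (simp add: L.gen_eq)
  qed
  have part1: "\<forall>k l. k \<le> p - 2 \<and> l \<le> p - 1 \<longrightarrow>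
            (holomorph N)\<lparr>carrier := A k l\<rparr> \<cong> integer_mod_group p \<times>\<times> integer_mod_group p"
    unfolding AS NN using L.S_iso by blast
  have part2: "card {A k l | k l. k \<le> p - 2 \<and> l \<le> p - 1} = p ^ 2 - p"
  proof -
    have eq: "{A k l | k l. k \<le> p - 2 \<and> l \<le> p - 1} = (\<lambda>(k,l). A k l) ` ({..p-2} \<times> {..p-1})"
      by auto
    have inj: "inj_on (\<lambda>(k,l). A k l) ({..p-2} \<times> {..p-1})"
    proof (rule inj_onI)
      fix x y assume x: "x \<in> {..p-2} \<times> {..p-1}" and y: "y \<in> {..p-2} \<times> {..p-1}"
        and e: "(\<lambda>(k,l). A k l) x = (\<lambda>(k,l). A k l) y"
      obtain k l k' l' where xy: "x = (k,l)" "y = (k',l')" by (cases x; cases y)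
      have "L.S (int k) (int l) = L.S (int k') (int l')" using e unfolding xy AS by simp
      then have m: "int k mod int p = int k' mod int p" "int l mod int p = int l' mod int p"
        using L.S_inj by blast+
      have "k < p" "k' < p" "l < p" "l' < p" using x y xy L.p3 by auto
      then show "x = y" using m xy by simp
    qed
    have c1: "card {..p-2} = p - 1" using L.p3 by simp
    have c2: "card {..p-1} = p" using L.p3 by simp
    have "card ({..p-2} \<times> {..p-1}) = (p - 1) * p" by (simp only: card_cartesian_product c1 c2)
    also have "\<dots> = p ^ 2 - p" by (simp add: power2_eq_square diff_mult_distrib)
    finally show ?thesis unfolding eq using card_image[OF inj] by simp
  qed
  have part3: "{H. subgroup H (holomorph N) \<and> semiregular N H \<and> card H = p ^ 2}
           = {A k l | k l. k \<le> p - 2 \<and> l \<le> p - 1}"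
  proof
    show "{H. subgroup H (holomorph N) \<and> semiregular N H \<and> card H = p ^ 2} \<subseteq> {A k l | k l. k \<le> p - 2 \<and> l \<le> p - 1}"
    proof
      fix H assume "H \<in> {H. subgroup H (holomorph N) \<and> semiregular N H \<and> card H = p ^ 2}"
      then have "subgroup H L.Hol" "semiregular L.N H" "card H = p * p"
        unfolding NN by (auto simp: power2_eq_square)
      then obtain k l where kl: "0 \<le> k" "k \<le> int p - 2" "0 \<le> l" "l \<le> int p - 1" "H = L.S k l"
        using L.converse by blast
      have "H = A (nat k) (nat l)" using kl by (simp add: AS)
      moreover have "nat k \<le> p - 2" "nat l \<le> p - 1" using kl L.p3 by auto
      ultimately show "H \<in> {A k l | k l. k \<le> p - 2 \<and> l \<le> p - 1}" by blast
    qed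
  next
    show "{A k l | k l. k \<le> p - 2 \<and> l \<le> p - 1} \<subseteq> {H. subgroup H (holomorph N) \<and> semiregular N H \<and> card H = p ^ 2}"
    proof
      fix H assume "H \<in> {A k l | k l. k \<le> p - 2 \<and> l \<le> p - 1}"
      then obtain k l where kl: "k \<le> p - 2" "l \<le> p - 1" "H = A k l" by blast
      have km: "int k mod int p \<noteq> int p - 1" using kl L.p3 by auto
      have "subgroup H L.Hol" "semiregular L.N H" "card H = p * p"
        using kl L.S_subgroup L.S_semireg[OF km] L.S_card by (simp_all add: AS)
      then show "H \<in> {H. subgroup H (holomorph N) \<and> semiregular N H \<and> card H = p ^ 2}"
        unfolding NN by (simp add: power2_eq_square)
    qed
  qed
  show ?thesis using part1 part2 part3 by blast
qed

end
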